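(* For every real $x$, the improper Riemann integral below (improper at $t=\pi/2$) converges and $$H_1(x):=1+\int_0^{\pi/2}\left(\frac{x\sec^2 t\, e^{-x\tan t}}{\left(1+e^{-x\tan t}\right)^2}-\frac12 e^{-x^2\tan t}x^2\sec^2 t\right)dt=\begin{cases}0,& x<0,\\ 1,& x\ge 0.\end{cases}$$ *)

theory Defs
  imports "HOL-Analysis.Analysis"
begin

end

theory Submission imports Defs "HOL-Real_Asymp.Real_Asymp" begin

lemma A6: "(x::real) > 0 \<Longrightarrow> ((\<lambda>u. inverse (1 + exp (- x * u)) + 1/2 * exp (- (x\<^sup>2) * u)) \<longlongrightarrow> 1) at_top"
  by real_asymp

lemma B6: "(x::real) < 0 \<Longrightarrow> ((\<lambda>u. inverse (1 + exp (- x * u)) + 1/2 * exp (- (x\<^sup>2) * u)) \<longlongrightarrow> 0) at_top"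
proof -
  assume x: "x < 0" 
  have "((\<lambda>u. inverse (1 + exp (- x * u))) \<longlongrightarrow> 0) at_top"
    using x by real_asymp
  moreover have "x\<^sup>2 > 0" using x by simp
  hence "((\<lambda>u. 1/2 * exp (- (x\<^sup>2) * u)) \<longlongrightarrow> 0) at_top"
    by real_asymp
  ultimately show ?thesis using tendsto_add by fastforce
qed

lemma D6: assumes c: "cos t \<noteq> 0" shows "((\<lambda>t. inverse (1 + exp (- x * tan t)) + 1/2 * exp (- (x\<^sup>2) * tan t)) has_real_derivative
  (x * (1 / (cos t)\<^sup>2) * exp (- x * tan t) / (1 + exp (- x * tan t))\<^sup>2
                    - 1/2 * exp (- (x\<^sup>2) * tan t) * x\<^sup>2 * (1 / (cos t)\<^sup>2))) (at t)"
proof -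
  have p: "1 + exp (- x * tan t) \<noteq> 0" by (smt (verit) exp_gt_zero)
  have "((\<lambda>t. exp (- x * tan t)) has_real_derivative exp (- x * tan t) * (- x * inverse ((cos t)\<^sup>2))) (at t)"
    by (rule DERIV_chain2[OF DERIV_exp]) (rule DERIV_cmult, rule DERIV_tan[OF c])
  hence "((\<lambda>t. 1 + exp (- x * tan t)) has_real_derivative 0 + exp (- x * tan t) * (- x * inverse ((cos t)\<^sup>2))) (at t)"
    by (rule DERIV_add[OF DERIV_const])
  hence d1: "((\<lambda>t. inverse (1 + exp (- x * tan t))) has_real_derivative
     - ((0 + exp (- x * tan t) * (- x * inverse ((cos t)\<^sup>2))) * inverse ((1 + exp (- x * tan t)) ^ Suc (Suc 0)))) (at t)"
    using p by (rule DERIV_inverse_fun)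
  have "((\<lambda>t. exp (- (x\<^sup>2) * tan t)) has_real_derivative exp (- (x\<^sup>2) * tan t) * (- (x\<^sup>2) * inverse ((cos t)\<^sup>2))) (at t)"
    by (rule DERIV_chain2[OF DERIV_exp]) (rule DERIV_cmult, rule DERIV_tan[OF c])
  hence d2: "((\<lambda>t. 1/2 * exp (- (x\<^sup>2) * tan t)) has_real_derivative 1/2 * (exp (- (x\<^sup>2) * tan t) * (- (x\<^sup>2) * inverse ((cos t)\<^sup>2)))) (at t)"
    by (rule DERIV_cmult)
  from DERIV_add[OF d1 d2] show ?thesis
    by (rule DERIV_cong) (simp add: field_simps power2_eq_square p)
qed

theorem mainTheorem6:
  fixes x :: real
  defines "f \<equiv> (\<lambda>t::real. x * (1 / (cos t)\<^sup>2) * exp (- x * tan t) / (1 + exp (- x * tan t))\<^sup>2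
                    - 1/2 * exp (- (x\<^sup>2) * tan t) * x\<^sup>2 * (1 / (cos t)\<^sup>2))"
  shows "(\<forall>b\<in>{0..<pi/2}. f integrable_on {0..b}) \<and>
         (\<exists>L. ((\<lambda>b. integral {0..b} f) \<longlongrightarrow> L) (at_left (pi/2)) \<and>
              1 + L = (if x < 0 then 0 else 1))"
proof -
  define G where "G = (\<lambda>u. inverse (1 + exp (- x * u)) + 1/2 * exp (- (x\<^sup>2) * u))"
  define F where "F = (\<lambda>t. G (tan t))"
  have F0: "F 0 = 1" by (simp add: F_def G_def)
  have HI: "(f has_integral F b - 1) {0..b}" if b: "b \<in> {0..<pi/2}" for b
  proof -
    have "(f has_integral F b - F 0) {0..b}"
    proof (rule fundamental_theorem_of_calculus)
      show "0 \<le> b" using b by simp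
      fix t assume t: "t \<in> {0..b}"
      hence "cos t > 0" using b by (intro cos_gt_zero_pi) auto
      hence "(F has_real_derivative f t) (at t)"
        unfolding F_def G_def f_def using D6[of t x] by simp
      thus "(F has_vector_derivative f t) (at t within {0..b})"
        using has_real_derivative_iff_has_vector_derivative has_vector_derivative_at_within by blast
    qed
    thus ?thesis using F0 by simp
  qed
  have 1: "\<forall>b\<in>{0..<pi/2}. f integrable_on {0..b}" using HI by blast
  define M where "M = (if x < 0 then 0 else (1::real))"
  have GM: "(G \<longlongrightarrow> M) at_top"
  proof (cases "x = 0")
    case True thus ?thesis by (simp add: G_def M_def)
  next
    case False thus ?thesis using A6[of x] B6[of x] by (auto simp: G_def M_def)
  qed
  have FM: "(F \<longlongrightarrow> M) (at_left (pi/2))"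
    unfolding F_def using filterlim_compose[OF GM filterlim_tan_at_left] by simp
  have ev: "eventually (\<lambda>b. F b - 1 = integral {0..b} f) (at_left (pi/2))"
  proof -
    have "eventually (\<lambda>b. b \<in> {0<..<pi/2}) (at_left (pi/2))"
      by (rule eventually_at_left_real) simp
    thus ?thesis
      by eventually_elim (metis HI greaterThanLessThan_iff atLeastLessThan_iff integral_unique less_eq_real_def)
  qed
  have "((\<lambda>b. integral {0..b} f) \<longlongrightarrow> M - 1) (at_left (pi/2))"
    using tendsto_cong[OF ev] tendsto_diff[OF FM tendsto_const] by blast
  moreover have "1 + (M - 1) = (if x < 0 then 0 else 1)" by (simp add: M_def)
  ultimately show ?thesis using 1 by blast
qed

end
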